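(* Let $q$ be a query with sensitivity $\Delta q$, let $\mu\in\mathbb R$, $\sigma>0$, $0\le a<c\le\infty$, and let the random scale $b$ be such that $1/b$ has the normal distribution $\mathcal N(\mu,\sigma^2)$ truncated to $[a,c]$, with moment generating function $M_{\mathcal N^T}$. Then the R$^2$DP Laplace mechanism $\mathcal M_q(d,b)=q(d)+\mathrm{Lap}(b)$ satisfies $\epsilon_{\mathcal N^T}$-differential privacy, where $$\epsilon_{\mathcal N^T}=\ln\left[\frac{\mu+\frac{\sigma(\phi(\alpha)-\phi(\beta))}{\Phi(\beta)-\Phi(\alpha)}}{\frac{dM_{\mathcal N^T}(t)}{dt}\big|_{t=-\Delta q}}\right],$$ with $\alpha=\frac{a-\mu}{\sigma}$, $\beta=\frac{c-\mu}{\sigma}$, $\phi$ the standard normal density and $\Phi$ the standard normal cumulative distribution function.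
   Context: The truncated normal distribution on $[a,c]$ has density $\frac{\phi((x-\mu)/\sigma)}{\sigma(\Phi(\beta)-\Phi(\alpha))}$ for $a\le x\le c$ and $0$ otherwise. $\mathrm{Lap}(b)$ is the zero-mean Laplace distribution with density $\frac1{2b}e^{-|x|/b}$; the R$^2$DP Laplace mechanism draws the random scale $b$ (independently of the data) and adds $\mathrm{Lap}(b)$ noise to $q(d)$. $\Delta q=\max|q(d)-q(d')|$ over datasets differing in one individual's data. $\epsilon$-differential privacy: $\mathbb P(\mathcal M(d)\in S)\le e^\epsilon\mathbb P(\mathcal M(d')\in S)$ for all such $d,d'$ and measurable $S$. *)

theory Defs
  imports "HOL-Probability.Probability"
begin

text \<open>Standard normal density phi and CDF Phi, extended to ereal arguments
  (Phi(+inf) = 1, phi(+inf) = 0; -inf analogously), so that c = infinity is allowed.\<close>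

definition std_normal_measure :: "real measure" where
  "std_normal_measure = density lborel std_normal_density"

definition Phi :: "ereal \<Rightarrow> real" where
  "Phi y = measure std_normal_measure {x. ereal x \<le> y}"

definition phi :: "ereal \<Rightarrow> real" where
  "phi y = (case y of ereal x \<Rightarrow> std_normal_density x | _ \<Rightarrow> 0)"

definition tn_alpha :: "real \<Rightarrow> real \<Rightarrow> real \<Rightarrow> ereal" where
  "tn_alpha \<mu> \<sigma> a = ereal ((a - \<mu>) / \<sigma>)"

definition tn_beta :: "real \<Rightarrow> real \<Rightarrow> ereal \<Rightarrow> ereal" where
  "tn_beta \<mu> \<sigma> c = (c - ereal \<mu>) / ereal \<sigma>"

definition trunc_normal :: "real \<Rightarrow> real \<Rightarrow> real \<Rightarrow> ereal \<Rightarrow> real measure" where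
  "trunc_normal \<mu> \<sigma> a c = density lborel (\<lambda>x.
     ennreal (if a \<le> x \<and> ereal x \<le> c
      then std_normal_density ((x - \<mu>) / \<sigma>) /
           (\<sigma> * (Phi (tn_beta \<mu> \<sigma> c) - Phi (tn_alpha \<mu> \<sigma> a)))
      else 0))"

definition mgf :: "real measure \<Rightarrow> real \<Rightarrow> real" where
  "mgf P t = (\<integral>x. exp (t * x) \<partial>P)"

definition laplace_density :: "real \<Rightarrow> real \<Rightarrow> real" where
  "laplace_density b x = exp (- \<bar>x\<bar> / b) / (2 * b)"

definition R2DP_laplace :: "real measure \<Rightarrow> real \<Rightarrow> real measure" where
  "R2DP_laplace B v = density lborel (\<lambda>x. \<integral>\<^sup>+ b. ennreal (laplace_density b (x - v)) \<partial>B)"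

definition sensitivity :: "('d \<Rightarrow> 'd \<Rightarrow> bool) \<Rightarrow> ('d \<Rightarrow> real) \<Rightarrow> real" where
  "sensitivity adj q = (SUP p \<in> {(d, d'). adj d d'}. \<bar>q (fst p) - q (snd p)\<bar>)"

definition differentially_private ::
    "('d \<Rightarrow> 'd \<Rightarrow> bool) \<Rightarrow> ('d \<Rightarrow> real measure) \<Rightarrow> real \<Rightarrow> bool" where
  "differentially_private adj M \<epsilon> \<longleftrightarrow>
     (\<forall>d d'. adj d d' \<longrightarrow> (\<forall>S \<in> sets borel.
        emeasure (M d) S \<le> ennreal (exp \<epsilon>) * emeasure (M d') S))"

end

theory Submission
  imports Defs "HOL-Real_Asymp.Real_Asymp"
begin

lemma exp_sq:
  assumes "\<sigma> > 0"
  shows "exp (s*r) * normal_density \<mu> \<sigma> r = exp (s*\<mu> + s^2*\<sigma>^2/2) * normal_density (\<mu>+s*\<sigma>^2) \<sigma> r"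
proof -
  have "s*r + (-(r - \<mu>)\<^sup>2/ (2 * \<sigma>\<^sup>2)) = (s*\<mu> + s^2*\<sigma>^2/2) + (-(r - (\<mu>+s*\<sigma>^2))\<^sup>2/ (2 * \<sigma>\<^sup>2))"
    using assms by (simp add: field_simps power2_eq_square)
  then have "exp (s*r) * exp (-(r - \<mu>)\<^sup>2/ (2 * \<sigma>\<^sup>2)) = exp (s*\<mu> + s^2*\<sigma>^2/2) * exp (-(r - (\<mu>+s*\<sigma>^2))\<^sup>2/ (2 * \<sigma>\<^sup>2))"
    by (metis exp_add)
  then show ?thesis unfolding normal_density_def by (metis (no_types, lifting) mult.left_commute)
qed

lemma snd_scale:
  assumes "\<sigma> > 0"
  shows "std_normal_density ((r-\<mu>)/\<sigma>) / \<sigma> = normal_density \<mu> \<sigma> r"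
proof -
  have "sqrt (2*pi*\<sigma>^2) = sqrt (2*pi) * \<sigma>" using assms by (simp add: real_sqrt_mult)
  moreover have "((r-\<mu>)/\<sigma>)^2 = (r-\<mu>)^2/\<sigma>^2" by (simp add: power_divide)
  ultimately show ?thesis unfolding normal_density_def using assms by (simp add: field_simps)
qed

lemma pos_integral_lborel:
  fixes f :: "real \<Rightarrow> real"
  assumes int: "integrable lborel f" and nn: "\<And>x. 0 \<le> f x" and lu: "l < u"
    and pos: "\<And>x. l < x \<Longrightarrow> x < u \<Longrightarrow> 0 < f x"
  shows "0 < integral\<^sup>L lborel f"
proof (rule ccontr)
  assume "\<not> 0 < integral\<^sup>L lborel f"
  moreover have "0 \<le> integral\<^sup>L lborel f" using nn by simp
  ultimately have "integral\<^sup>L lborel f = 0" by simp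
  then have "AE x in lborel. f x = 0" using integral_nonneg_eq_0_iff_AE[OF int] nn by simp
  then have "AE x in lborel. x \<notin> {l<..<u}"
    by eventually_elim (use pos in force)
  then have "emeasure lborel {l<..<u} = 0"
    by (subst (asm) AE_iff_measurable[of "{l<..<u}"]) auto
  with lu show False by simp
qed

lemma exp_sub_one_bound: "\<bar>exp (u::real) - 1\<bar> \<le> \<bar>u\<bar> * exp \<bar>u\<bar>"
proof (cases "u \<ge> 0")
  case True
  have "1 - u \<le> exp (-u)" using exp_ge_add_one_self[of "-u"] by simp
  then have "exp u * (1 - u) \<le> exp u * exp (-u)" by (intro mult_left_mono) auto
  then have "exp u - u * exp u \<le> 1" by (simp add: exp_minus field_simps)
  moreover have "1 \<le> exp u" using True by simp
  ultimately show ?thesis using True by (simp add: algebra_simps)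
next
  case False
  have "1 + u \<le> exp u" by (rule exp_ge_add_one_self)
  moreover have "exp u \<le> 1" using False by simp
  moreover have "1 \<le> exp \<bar>u\<bar>" by simp
  ultimately show ?thesis using False
    by (smt (verit, best) mult_le_cancel_left1)
qed

lemma mgf_integrable2:
  fixes M :: "real measure"
  assumes sM: "sets M = sets borel" and nn: "AE x in M. 0 \<le> x"
    and int: "\<And>s. integrable M (\<lambda>x. exp (s*x))"
  shows "integrable M (\<lambda>x. x * exp (s*x))"
proof (rule Bochner_Integration.integrable_bound[OF int[of "s+1"]])
  have bm: "(borel_measurable M :: (real \<Rightarrow> real) set) = borel_measurable borel" by (rule measurable_cong_sets[OF sM refl])
  show "(\<lambda>x. x * exp (s*x)) \<in> borel_measurable M" unfolding bm by measurable
  show "AE x in M. norm (x * exp (s*x)) \<le> norm (exp ((s+1)*x))"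
    using nn
  proof eventually_elim
    case (elim x)
    have "x \<le> exp x" using exp_ge_add_one_self[of x] by linarith
    then have "x * exp (s*x) \<le> exp x * exp (s*x)" by (intro mult_right_mono) auto
    then show ?case using elim by (simp add: exp_add[symmetric] algebra_simps)
  qed
qed

lemma mgf_deriv:
  fixes M :: "real measure"
  assumes sM: "sets M = sets borel" and nn: "AE x in M. 0 \<le> x"
    and int: "\<And>s. integrable M (\<lambda>x. exp (s*x))"
  shows "((\<lambda>t. \<integral>x. exp (t*x) \<partial>M) has_real_derivative (\<integral>x. x * exp (t*x) \<partial>M)) (at t)"
proof -
  have bm: "(borel_measurable M :: (real \<Rightarrow> real) set) = borel_measurable borel" by (rule measurable_cong_sets[OF sM refl])
  have meas: "\<And>f. f \<in> borel_measurable borel \<Longrightarrow> (f::real\<Rightarrow>real) \<in> borel_measurable M"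
    using bm by simp
  have int2: "\<And>s. integrable M (\<lambda>x. x * exp (s*x))"
    by (rule mgf_integrable2[OF sM nn int])
  define Q where "Q h x = (exp ((t+h)*x) - exp (t*x)) / h" for h x
  have eq: "((\<integral>x. exp ((t+h)*x) \<partial>M) - (\<integral>x. exp (t*x) \<partial>M)) / h = (\<integral>x. Q h x \<partial>M)" for h
    unfolding Q_def by (simp add: Bochner_Integration.integral_diff[OF int int])
  have "((\<lambda>h. \<integral>x. Q h x \<partial>M) \<longlongrightarrow> (\<integral>x. x * exp (t*x) \<partial>M)) (at 0 within ball 0 1)"
    unfolding tendsto_at_iff_sequentially
  proof (intro allI impI)
    fix X :: "nat \<Rightarrow> real"
    assume X: "\<forall>i. X i \<in> ball 0 1 - {0}" and X0: "X \<longlonglongrightarrow> 0"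
    show "((\<lambda>h. \<integral>x. Q h x \<partial>M) \<circ> X) \<longlonglongrightarrow> (\<integral>x. x * exp (t*x) \<partial>M)"
      unfolding comp_def
    proof (rule integral_dominated_convergence[where w="\<lambda>x. x * exp ((t+1)*x)"])
      show "(\<lambda>x. x * exp (t*x)) \<in> borel_measurable M" by (rule meas) simp
      show "(\<lambda>x. Q (X i) x) \<in> borel_measurable M" for i unfolding Q_def by (rule meas) simp
      show "integrable M (\<lambda>x. x * exp ((t+1)*x))" by (rule int2)
      show "AE x in M. (\<lambda>i. Q (X i) x) \<longlonglongrightarrow> x * exp (t*x)"
      proof (rule AE_I2)
        fix x
        have "((\<lambda>s. exp (s*x)) has_real_derivative x * exp (t*x)) (at t)"
          by (auto intro!: derivative_eq_intros)
        then have "((\<lambda>h. (exp ((t+h)*x) - exp (t*x)) / h) \<longlongrightarrow> x * exp (t*x)) (at 0 within UNIV)"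
          unfolding DERIV_def by simp
        then show "(\<lambda>i. Q (X i) x) \<longlonglongrightarrow> x * exp (t*x)"
          unfolding tendsto_at_iff_sequentially Q_def comp_def using X X0 by auto
      qed
      show "AE x in M. norm (Q (X i) x) \<le> x * exp ((t+1)*x)" for i
        using nn
      proof eventually_elim
        case (elim x)
        define h where "h = X i"
        have h0: "h \<noteq> 0" and h1: "\<bar>h\<bar> < 1" using X unfolding h_def by auto
        have "Q h x = exp (t*x) * (exp (h*x) - 1) / h"
          unfolding Q_def by (simp add: algebra_simps exp_add[symmetric])
        then have "\<bar>Q h x\<bar> = exp (t*x) * \<bar>exp (h*x) - 1\<bar> / \<bar>h\<bar>" by (simp add: abs_mult)
        also have "\<dots> \<le> exp (t*x) * (\<bar>h*x\<bar> * exp \<bar>h*x\<bar>) / \<bar>h\<bar>"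
          by (intro divide_right_mono mult_left_mono exp_sub_one_bound) auto
        also have "\<dots> = exp (t*x) * x * exp (\<bar>h\<bar>*x)"
          using h0 elim by (simp add: abs_mult)
        also have "\<dots> \<le> exp (t*x) * x * exp x"
          proof -
          have hh: "\<bar>h\<bar> \<le> 1" using h1 by linarith
          have "\<bar>h\<bar> * x \<le> 1 * x" using hh elim by (rule mult_right_mono)
          then have "exp (\<bar>h\<bar>*x) \<le> exp x" by (simp only: exp_le_cancel_iff mult_1)
          moreover have "0 \<le> exp (t*x) * x" using elim by simp
          ultimately show ?thesis by (rule mult_left_mono)
        qed
        also have "\<dots> = x * exp ((t+1)*x)" by (simp add: algebra_simps exp_add[symmetric])
        finally have "\<bar>Q h x\<bar> \<le> x * exp ((t+1)*x)" .
        then show ?case unfolding h_def real_norm_def .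
      qed
    qed
  qed
  moreover have "at (0::real) within ball 0 1 = at 0" by (rule at_within_open) auto
  ultimately have "((\<lambda>h. \<integral>x. Q h x \<partial>M) \<longlongrightarrow> (\<integral>x. x * exp (t*x) \<partial>M)) (at 0)"
    by simp
  then show ?thesis unfolding DERIV_def eq .
qed

lemma powr_prod_nonneg:
  fixes u g p :: real
  assumes "0 \<le> u" "0 \<le> g" "0 \<le> p"
  shows "0 \<le> (u powr p - g powr p) * (u - g)"
proof (cases "u \<le> g")
  case True
  then have "u powr p \<le> g powr p" using assms by (intro powr_mono2) auto
  then show ?thesis using True by (intro mult_nonpos_nonpos) auto
next
  case False
  then have "g powr p \<le> u powr p" using assms by (intro powr_mono2) auto
  then show ?thesis using False by (intro mult_nonneg_nonneg) auto
qed

lemma corr_ineq: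
  fixes M :: "real measure"
  assumes sM: "sets M = sets borel" and nn: "AE x in M. 0 \<le> x"
    and int: "\<And>t. integrable M (\<lambda>x. x * exp (t*x))"
    and s0: "0 \<le> s" and d0: "0 \<le> d"
  shows "(\<integral>x. x * exp ((-s)*x) \<partial>M) * (\<integral>x. x * exp ((-d)*x) \<partial>M)
     \<le> (\<integral>x. x * exp ((-0)*x) \<partial>M) * (\<integral>x. x * exp ((-(s+d))*x) \<partial>M)"
proof -
  define E where "E u = (\<integral>x. x * exp ((-u)*x) \<partial>M)" for u
  have bm: "(borel_measurable M :: (real \<Rightarrow> real) set) = borel_measurable borel" by (rule measurable_cong_sets[OF sM refl])
  have Enn: "0 \<le> E u" for u unfolding E_def
    by (rule integral_nonneg_AE) (use nn in \<open>eventually_elim, auto\<close>)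
  have Emono: "E u \<le> E 0" if "0 \<le> u" for u unfolding E_def
  proof (rule integral_mono_AE)
    show "integrable M (\<lambda>x. x * exp ((-u)*x))" "integrable M (\<lambda>x. x * exp ((-0)*x))" by (rule int)+
    show "AE x in M. x * exp ((-u)*x) \<le> x * exp ((-0)*x)"
      using nn by eventually_elim (use that in \<open>auto intro!: mult_left_le simp: mult_nonneg_nonneg\<close>)
  qed
  have "E s * E d \<le> E 0 * E (s+d)"
  proof (cases "s = 0 \<or> d = 0 \<or> E 0 = 0")
    case True
    then show ?thesis
    proof (elim disjE)
      assume "E 0 = 0"
      then have "E s = 0" using Emono[OF s0] Enn[of s] by simp
      then show ?thesis using Enn by simp
    qed (auto simp: mult.commute)
  next
    case False
    then have sp: "s > 0" and dp: "d > 0" and E0: "E 0 > 0" using s0 d0 Enn[of 0] by auto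
    define g where "g = E d / E 0"
    define p where "p = s / d"
    have g0: "0 \<le> g" unfolding g_def using Enn E0 by simp
    have p0: "0 \<le> p" unfolding p_def using sp dp by simp
    have i: "has_bochner_integral M (\<lambda>x. x * exp ((-u)*x)) (E u)" for u
      unfolding E_def by (rule has_bochner_integral_integrable[OF int])
    have hb: "has_bochner_integral M (\<lambda>x. x * exp ((-(s+d))*x) - g * (x * exp ((-s)*x))
        - g powr p * (x * exp ((-d)*x)) + g powr p * g * (x * exp ((-0)*x)))
        (E (s+d) - g * E s - g powr p * E d + g powr p * g * E 0)"
      by (intro has_bochner_integral_add has_bochner_integral_diff has_bochner_integral_mult_right i)
    have fe: "x * exp ((-(s+d))*x) - g * (x * exp ((-s)*x))
        - g powr p * (x * exp ((-d)*x)) + g powr p * g * (x * exp ((-0)*x))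
        = x * ((exp ((-d)*x) powr p - g powr p) * (exp ((-d)*x) - g))" for x
    proof -
      have "exp ((-d)*x) powr p = exp ((-s)*x)"
        unfolding powr_def p_def using dp by simp
      moreover have "exp ((-(s+d))*x) = exp ((-s)*x) * exp ((-d)*x)"
        by (simp add: exp_add[symmetric] algebra_simps)
      ultimately show ?thesis by (simp add: algebra_simps)
    qed
    have "0 \<le> E (s+d) - g * E s - g powr p * E d + g powr p * g * E 0"
      unfolding has_bochner_integral_integral_eq[OF hb, symmetric]
      unfolding fe
    proof (rule integral_nonneg_AE)
      show "AE x in M. 0 \<le> x * ((exp ((-d)*x) powr p - g powr p) * (exp ((-d)*x) - g))"
        using nn by eventually_elim (intro mult_nonneg_nonneg powr_prod_nonneg, auto simp: g0 p0)
    qed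
    moreover have "g * E 0 = E d" unfolding g_def using E0 by simp
    ultimately have "0 \<le> E (s+d) - g * E s - g powr p * E d + g powr p * E d"
      by (metis mult.assoc)
    then have "g * E s \<le> E (s+d)" by simp
    then have "E d / E 0 * E s \<le> E (s+d)" unfolding g_def .
    then show ?thesis using E0 by (simp add: field_simps)
  qed
  then show ?thesis unfolding E_def .
qed


definition Zc :: "real \<Rightarrow> real \<Rightarrow> real \<Rightarrow> ereal \<Rightarrow> real" where
  "Zc \<mu> \<sigma> a c = Phi (tn_beta \<mu> \<sigma> c) - Phi (tn_alpha \<mu> \<sigma> a)"

definition Sz :: "real \<Rightarrow> real \<Rightarrow> real \<Rightarrow> ereal \<Rightarrow> real set" where
  "Sz \<mu> \<sigma> a c = {z. (a-\<mu>)/\<sigma> \<le> z \<and> ereal z \<le> tn_beta \<mu> \<sigma> c}"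

lemma snd_deriv: "((\<lambda>z. - std_normal_density z) has_real_derivative (z * std_normal_density z)) (at z)"
proof -
  have e: "pi * 2 = sqrt (pi*2) * sqrt (pi*2)" by simp
  have "z * (sqrt (pi * 2) * exp (- (z * z / 2))) / (pi * 2) = z * exp (- (z * z / 2)) / sqrt (pi * 2)"
    by (subst (2) e) (simp add: field_simps)
  then show ?thesis unfolding std_normal_density_def
    by (auto intro!: derivative_eq_intros simp: algebra_simps power2_eq_square)
qed

lemma snd_tendsto0: "(std_normal_density \<longlongrightarrow> 0) at_top"
  unfolding std_normal_density_def by real_asymp

lemma Phi_integral: "Phi y = (\<integral>x. std_normal_density x * indicator {x. ereal x \<le> y} x \<partial>lborel)"
proof -
  have "Phi y = (\<integral>x. indicator {x. ereal x \<le> y} x \<partial>std_normal_measure)"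
    unfolding Phi_def std_normal_measure_def by simp
  also have "\<dots> = (\<integral>x. std_normal_density x * indicator {x. ereal x \<le> y} x \<partial>lborel)"
    unfolding std_normal_measure_def by (subst integral_density) auto
  finally show ?thesis .
qed

definition gd :: "real \<Rightarrow> real \<Rightarrow> real \<Rightarrow> ereal \<Rightarrow> real \<Rightarrow> real" where
  "gd \<mu> \<sigma> a c r = (if a \<le> r \<and> ereal r \<le> c
      then std_normal_density ((r - \<mu>) / \<sigma>) / (\<sigma> * Zc \<mu> \<sigma> a c) else 0)"

lemma TN_eq: "trunc_normal \<mu> \<sigma> a c = density lborel (\<lambda>x. ennreal (gd \<mu> \<sigma> a c x))"
  unfolding trunc_normal_def gd_def Zc_def ..

lemma gd_meas[measurable]: "gd \<mu> \<sigma> a c \<in> borel_measurable borel"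
  unfolding gd_def[abs_def] by measurable

lemma sets_TN: "sets (trunc_normal \<mu> \<sigma> a c) = sets borel"
  unfolding TN_eq by simp

context
  fixes \<mu> \<sigma> a :: real and c :: ereal
  assumes \<sigma>_pos: "\<sigma> > 0" and a_nonneg: "0 \<le> a" and a_less_c: "ereal a < c"
begin

lemma idx: "(a \<le> \<mu> + \<sigma>*z \<and> ereal (\<mu> + \<sigma>*z) \<le> c) \<longleftrightarrow> z \<in> Sz \<mu> \<sigma> a c"
proof -
  have 1: "a \<le> \<mu> + \<sigma>*z \<longleftrightarrow> (a-\<mu>)/\<sigma> \<le> z" using \<sigma>_pos by (simp add: pos_divide_le_eq algebra_simps)
  have 2: "ereal (\<mu> + \<sigma>*z) \<le> c \<longleftrightarrow> ereal z \<le> tn_beta \<mu> \<sigma> c"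
  proof (cases c)
    case (real c0)
    then show ?thesis unfolding tn_beta_def using \<sigma>_pos by (simp add: pos_le_divide_eq algebra_simps)
  next
    case PInf
    then show ?thesis unfolding tn_beta_def using \<sigma>_pos by simp
  next
    case MInf
    then show ?thesis unfolding tn_beta_def using \<sigma>_pos by simp
  qed
  show ?thesis unfolding Sz_def using 1 2 by simp
qed

lemma al_be: "ereal ((a-\<mu>)/\<sigma>) < tn_beta \<mu> \<sigma> c"
proof (cases c)
  case (real c0)
  then have "a < c0" using a_less_c by simp
  then show ?thesis unfolding tn_beta_def using \<sigma>_pos real by (simp add: divide_strict_right_mono)
next
  case PInf
  then show ?thesis unfolding tn_beta_def using \<sigma>_pos by simp
next
  case MInf
  then show ?thesis using a_less_c by simp
qed

lemma Sz_meas[measurable]: "Sz \<mu> \<sigma> a c \<in> sets borel"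
  unfolding Sz_def by measurable

lemma Z1: "Zc \<mu> \<sigma> a c = (\<integral>z. indicator (Sz \<mu> \<sigma> a c) z * std_normal_density z \<partial>lborel)"
proof -
  let ?al = "(a-\<mu>)/\<sigma>" and ?be = "tn_beta \<mu> \<sigma> c"
  have i: "integrable lborel (\<lambda>x. std_normal_density x * indicator {x. ereal x \<le> y} x)" for y
    using integrable_mult_indicator[of "{x. ereal x \<le> y}" lborel std_normal_density] by (simp add: mult.commute)
  have "Zc \<mu> \<sigma> a c = (\<integral>x. std_normal_density x * indicator {x. ereal x \<le> ?be} x
      - std_normal_density x * indicator {x. ereal x \<le> ereal ?al} x \<partial>lborel)"
    unfolding Zc_def Phi_integral tn_alpha_def by (rule Bochner_Integration.integral_diff[OF i i, symmetric])
  also have "\<dots> = (\<integral>z. indicator (Sz \<mu> \<sigma> a c) z * std_normal_density z \<partial>lborel)"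
  proof (rule integral_cong_AE)
    show "AE x in lborel. std_normal_density x * indicator {x. ereal x \<le> ?be} x
      - std_normal_density x * indicator {x. ereal x \<le> ereal ?al} x = indicator (Sz \<mu> \<sigma> a c) x * std_normal_density x"
      using AE_lborel_singleton[of ?al]
    proof eventually_elim
      case (elim x)
      show ?case
      proof (cases "x < ?al")
        case True
        then have "ereal x < ereal ?al" by simp
        then have "ereal x < ?be" using al_be by (rule order.strict_trans)
        then have "ereal x \<le> ?be" by (rule less_imp_le)
        then show ?thesis using True unfolding Sz_def by (auto simp: indicator_def)
      next
        case False
        then show ?thesis using elim unfolding Sz_def by (auto simp: indicator_def)
      qed
    qed
  qed auto
  finally show ?thesis .
qed

lemma Zpos: "Zc \<mu> \<sigma> a c > 0"
proof -
  let ?al = "(a-\<mu>)/\<sigma>"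
  obtain u where u: "ereal ?al < ereal u" "ereal u < tn_beta \<mu> \<sigma> c" using ereal_dense2[OF al_be] by blast
  show ?thesis unfolding Z1
  proof (rule pos_integral_lborel[where l="?al" and u=u])
    show "integrable lborel (\<lambda>z. indicator (Sz \<mu> \<sigma> a c) z * std_normal_density z)"
      using integrable_mult_indicator[of "Sz \<mu> \<sigma> a c" lborel std_normal_density] by simp
    show "?al < u" using u by simp
    fix x assume "?al < x" "x < u"
    then have "ereal x < ereal u" "?al \<le> x" by auto
    then have "ereal x < tn_beta \<mu> \<sigma> c" "?al \<le> x" using order.strict_trans[OF _ u(2)] by blast+
    then have "x \<in> Sz \<mu> \<sigma> a c" unfolding Sz_def by auto
    then show "0 < indicator (Sz \<mu> \<sigma> a c) x * std_normal_density x" by (simp add: normal_density_pos)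
  qed (simp add: indicator_def)
qed

lemma Z2: "(\<integral>z. indicator (Sz \<mu> \<sigma> a c) z * (z * std_normal_density z) \<partial>lborel)
   = std_normal_density ((a-\<mu>)/\<sigma>) - phi (tn_beta \<mu> \<sigma> c)"
proof -
  let ?al = "(a-\<mu>)/\<sigma>" and ?be = "tn_beta \<mu> \<sigma> c"
  have der: "((\<lambda>z. - std_normal_density z) has_vector_derivative (z * std_normal_density z)) (at z within S)" for z S
    using snd_deriv[of z] by (simp add: has_real_derivative_iff_has_vector_derivative has_vector_derivative_at_within)
  have cont: "continuous_on S (\<lambda>z. z * std_normal_density z)" for S
    unfolding std_normal_density_def by (intro continuous_intros) auto
  have ftc: "(\<integral>z. indicator {?al..b} z * (z * std_normal_density z) \<partial>lborel) = std_normal_density ?al - std_normal_density b"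
    if "?al \<le> b" for b
    using integral_FTC_atLeastAtMost[OF that der cont] by simp
  show ?thesis
  proof (cases ?be)
    case (real b0)
    then have "Sz \<mu> \<sigma> a c = {?al..b0}" unfolding Sz_def by auto
    moreover have "?al \<le> b0" using al_be real by simp
    ultimately show ?thesis using ftc real by (simp add: phi_def)
  next
    case MInf
    then show ?thesis using al_be by simp
  next
    case PInf
    then have S: "Sz \<mu> \<sigma> a c = {?al..}" unfolding Sz_def by auto
    have lim1: "((\<lambda>t. \<integral>z. indicator {?al..t} z * (z * std_normal_density z) \<partial>lborel)
      \<longlongrightarrow> (\<integral>z. indicator {?al..} z * (z * std_normal_density z) \<partial>lborel)) at_top"
    proof (rule integral_dominated_convergence_at_top[where w="\<lambda>z. std_normal_density z * \<bar>z\<bar>"])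
      show "integrable lborel (\<lambda>z. std_normal_density z * \<bar>z\<bar>)"
        using integrable_std_normal_moment_abs[of 1] by simp
      show "AE x in lborel. ((\<lambda>t. indicator {?al..t} x * (x * std_normal_density x)) \<longlongrightarrow> indicator {?al..} x * (x * std_normal_density x)) at_top"
      proof (rule AE_I2)
        fix x
        have "\<forall>\<^sub>F t in at_top. indicator {?al..t} x * (x * std_normal_density x) = indicator {?al..} x * (x * std_normal_density x)"
          using eventually_ge_at_top[of x] by eventually_elim (auto simp: indicator_def)
        then show "((\<lambda>t. indicator {?al..t} x * (x * std_normal_density x)) \<longlongrightarrow> indicator {?al..} x * (x * std_normal_density x)) at_top"
          by (rule tendsto_eventually)
      qed
      show "\<forall>\<^sub>F i in at_top. AE x in lborel. norm (indicator {?al..i} x * (x * std_normal_density x)) \<le> std_normal_density x * \<bar>x\<bar>"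
        by (intro always_eventually allI AE_I2) (auto simp: indicator_def abs_mult)
    qed auto
    have "\<forall>\<^sub>F t in at_top. (\<integral>z. indicator {?al..t} z * (z * std_normal_density z) \<partial>lborel) = std_normal_density ?al - std_normal_density t"
      using eventually_ge_at_top[of ?al] by eventually_elim (rule ftc)
    moreover have "((\<lambda>t. std_normal_density ?al - std_normal_density t) \<longlongrightarrow> std_normal_density ?al - 0) at_top"
      by (intro tendsto_intros snd_tendsto0)
    ultimately have lim2: "((\<lambda>t. \<integral>z. indicator {?al..t} z * (z * std_normal_density z) \<partial>lborel) \<longlongrightarrow> std_normal_density ?al) at_top"
      by (simp add: tendsto_cong)
    have "(\<integral>z. indicator {?al..} z * (z * std_normal_density z) \<partial>lborel) = std_normal_density ?al"
      using tendsto_unique[OF _ lim1 lim2] by simp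
    then show ?thesis using S PInf by (simp add: phi_def)
  qed
qed


lemma gd_nn: "0 \<le> gd \<mu> \<sigma> a c r"
  unfolding gd_def using Zpos \<sigma>_pos by simp

lemma gd_bound: "gd \<mu> \<sigma> a c r \<le> normal_density \<mu> \<sigma> r / Zc \<mu> \<sigma> a c"
proof -
  have "std_normal_density ((r - \<mu>) / \<sigma>) / (\<sigma> * Zc \<mu> \<sigma> a c) = normal_density \<mu> \<sigma> r / Zc \<mu> \<sigma> a c"
    using snd_scale[OF \<sigma>_pos, of r \<mu>] by (metis divide_divide_eq_left)
  then show ?thesis unfolding gd_def using Zpos by (simp add: normal_density_nonneg)
qed

lemma AE_TN: "AE r in trunc_normal \<mu> \<sigma> a c. a \<le> r"
  unfolding TN_eq by (subst AE_density) (auto simp: gd_def split: if_splits)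

lemma AE_TN_nn: "AE r in trunc_normal \<mu> \<sigma> a c. 0 \<le> r"
  using AE_TN by eventually_elim (use a_nonneg in auto)

lemma integral_TN: "f \<in> borel_measurable borel \<Longrightarrow>
   (\<integral>r. f r \<partial>trunc_normal \<mu> \<sigma> a c) = (\<integral>r. gd \<mu> \<sigma> a c r * f r \<partial>lborel)"
  unfolding TN_eq by (subst integral_density) (auto simp: gd_nn)

lemma integrable_TN: "f \<in> borel_measurable borel \<Longrightarrow>
   integrable (trunc_normal \<mu> \<sigma> a c) f \<longleftrightarrow> integrable lborel (\<lambda>r. gd \<mu> \<sigma> a c r * f r)"
  unfolding TN_eq by (subst integrable_density) (auto simp: gd_nn)

lemma TN_exp_int: "integrable (trunc_normal \<mu> \<sigma> a c) (\<lambda>r. exp (s*r))"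
proof (subst integrable_TN)
  show "(\<lambda>r. exp (s*r)) \<in> borel_measurable borel" by simp
  let ?C = "exp (s*\<mu> + s^2*\<sigma>^2/2) / Zc \<mu> \<sigma> a c"
  show "integrable lborel (\<lambda>r. gd \<mu> \<sigma> a c r * exp (s*r))"
  proof (rule Bochner_Integration.integrable_bound)
    show "integrable lborel (\<lambda>r. ?C * normal_density (\<mu>+s*\<sigma>^2) \<sigma> r)"
      by (rule integrable_mult_right) (use \<sigma>_pos in \<open>auto intro: integrable_normal_density\<close>)
    show "(\<lambda>r. gd \<mu> \<sigma> a c r * exp (s*r)) \<in> borel_measurable lborel" by simp
    show "AE r in lborel. norm (gd \<mu> \<sigma> a c r * exp (s*r)) \<le> norm (?C * normal_density (\<mu>+s*\<sigma>^2) \<sigma> r)"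
    proof (rule AE_I2)
      fix r
      have "gd \<mu> \<sigma> a c r * exp (s*r) \<le> normal_density \<mu> \<sigma> r / Zc \<mu> \<sigma> a c * exp (s*r)"
        by (intro mult_right_mono gd_bound) auto
      also have "\<dots> = ?C * normal_density (\<mu>+s*\<sigma>^2) \<sigma> r"
        using exp_sq[OF \<sigma>_pos, of s r \<mu>] by (simp add: field_simps)
      finally show "norm (gd \<mu> \<sigma> a c r * exp (s*r)) \<le> norm (?C * normal_density (\<mu>+s*\<sigma>^2) \<sigma> r)"
        using gd_nn[of r] Zpos by (simp add: normal_density_nonneg)
    qed
  qed
qed

lemma TN_xexp_int: "integrable (trunc_normal \<mu> \<sigma> a c) (\<lambda>r. r * exp (s*r))"
  by (rule mgf_integrable2[OF sets_TN AE_TN_nn TN_exp_int])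

lemma TN_Epos: "0 < (\<integral>r. r * exp (s*r) \<partial>trunc_normal \<mu> \<sigma> a c)"
proof -
  obtain u where u: "ereal a < ereal u" "ereal u < c" using ereal_dense2[OF a_less_c] by blast
  have "0 < (\<integral>r. gd \<mu> \<sigma> a c r * (r * exp (s*r)) \<partial>lborel)"
  proof (rule pos_integral_lborel[where l=a and u=u])
    show "integrable lborel (\<lambda>r. gd \<mu> \<sigma> a c r * (r * exp (s*r)))"
      using TN_xexp_int[of s] by (subst (asm) integrable_TN) auto
    show "a < u" using u by simp
    show "0 \<le> gd \<mu> \<sigma> a c r * (r * exp (s*r))" for r
      using a_nonneg Zpos \<sigma>_pos by (auto simp: gd_def)
    fix r assume r: "a < r" "r < u"
    then have "ereal r < c" using order.strict_trans[OF _ u(2)] by simp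
    then have "0 < gd \<mu> \<sigma> a c r" unfolding gd_def using r Zpos \<sigma>_pos by (simp add: normal_density_pos)
    moreover have "0 < r" using r a_nonneg by simp
    ultimately show "0 < gd \<mu> \<sigma> a c r * (r * exp (s*r))" by simp
  qed
  then show ?thesis by (subst integral_TN) auto
qed

lemma gd_affine: "gd \<mu> \<sigma> a c (\<mu> + \<sigma>*z) = indicator (Sz \<mu> \<sigma> a c) z * std_normal_density z / (\<sigma> * Zc \<mu> \<sigma> a c)"
  unfolding gd_def using idx[of z] \<sigma>_pos by (simp add: indicator_def)

lemma TN_E0: "(\<integral>r. r \<partial>trunc_normal \<mu> \<sigma> a c)
   = \<mu> + \<sigma> * (phi (tn_alpha \<mu> \<sigma> a) - phi (tn_beta \<mu> \<sigma> c)) / (Phi (tn_beta \<mu> \<sigma> c) - Phi (tn_alpha \<mu> \<sigma> a))"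
proof -
  let ?S = "Sz \<mu> \<sigma> a c" and ?Z = "Zc \<mu> \<sigma> a c"
  have i1: "integrable lborel (\<lambda>z. indicator ?S z * std_normal_density z)"
    using integrable_mult_indicator[of ?S lborel std_normal_density] by simp
  have i2: "integrable lborel (\<lambda>z. indicator ?S z * (z * std_normal_density z))"
    using integrable_mult_indicator[of ?S lborel "\<lambda>z. std_normal_density z * z^1"]
      integrable_std_normal_moment[of 1] by (simp add: mult.commute)
  have "(\<integral>r. r \<partial>trunc_normal \<mu> \<sigma> a c) = (\<integral>r. gd \<mu> \<sigma> a c r * r \<partial>lborel)"
    by (subst integral_TN) auto
  also have "\<dots> = \<sigma> * (\<integral>z. gd \<mu> \<sigma> a c (\<mu> + \<sigma>*z) * (\<mu> + \<sigma>*z) \<partial>lborel)"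
    using lborel_integral_real_affine[of \<sigma> "\<lambda>r. gd \<mu> \<sigma> a c r * r" \<mu>] \<sigma>_pos by simp
  also have "(\<lambda>z. gd \<mu> \<sigma> a c (\<mu> + \<sigma>*z) * (\<mu> + \<sigma>*z))
     = (\<lambda>z. (1 / (\<sigma> * ?Z)) * (\<mu> * (indicator ?S z * std_normal_density z) + \<sigma> * (indicator ?S z * (z * std_normal_density z))))"
    unfolding gd_affine by (auto simp: field_simps)
  also have "\<sigma> * (\<integral>z. (1 / (\<sigma> * ?Z)) * (\<mu> * (indicator ?S z * std_normal_density z) + \<sigma> * (indicator ?S z * (z * std_normal_density z))) \<partial>lborel)
     = (1 / ?Z) * (\<mu> * ?Z + \<sigma> * (std_normal_density ((a-\<mu>)/\<sigma>) - phi (tn_beta \<mu> \<sigma> c)))"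
    using \<sigma>_pos
    by (simp add: Bochner_Integration.integral_add[OF integrable_mult_right[OF i1] integrable_mult_right[OF i2]] Z1[symmetric] Z2)
  also have "\<dots> = \<mu> + \<sigma> * (phi (tn_alpha \<mu> \<sigma> a) - phi (tn_beta \<mu> \<sigma> c)) / ?Z"
    using Zpos by (simp add: field_simps phi_def tn_alpha_def)
  finally show ?thesis unfolding Zc_def .
qed

end

lemma lap_inv: "laplace_density (1/r) y = r * exp ((-\<bar>y\<bar>)*r) / 2"
proof (cases "r = 0")
  case True
  then show ?thesis by (simp add: laplace_density_def)
next
  case False
  then show ?thesis by (simp add: laplace_density_def field_simps)
qed

theorem theoremB5:
  fixes adj :: "'d \<Rightarrow> 'd \<Rightarrow> bool" and q :: "'d \<Rightarrow> real"
    and \<mu> \<sigma> a :: real and c :: ereal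
  assumes sens_bdd: "bdd_above ((\<lambda>p. \<bar>q (fst p) - q (snd p)\<bar>) ` {(d, d'). adj d d'})"
    and \<sigma>_pos: "\<sigma> > 0" and a_nonneg: "0 \<le> a" and a_less_c: "ereal a < c"
  shows "differentially_private adj
           (\<lambda>d. R2DP_laplace (distr (trunc_normal \<mu> \<sigma> a c) borel (\<lambda>r. 1 / r)) (q d))
           (ln ((\<mu> + \<sigma> * (phi (tn_alpha \<mu> \<sigma> a) - phi (tn_beta \<mu> \<sigma> c))
                      / (Phi (tn_beta \<mu> \<sigma> c) - Phi (tn_alpha \<mu> \<sigma> a)))
                / deriv (mgf (trunc_normal \<mu> \<sigma> a c)) (- sensitivity adj q)))"
proof -
  let ?TN = "trunc_normal \<mu> \<sigma> a c"
  let ?B = "distr ?TN borel (\<lambda>r. 1 / r)"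
  note ctx = \<sigma>_pos a_nonneg a_less_c
  define F where "F s = (\<integral>x. x * exp ((-s)*x) \<partial>?TN)" for s
  have Fint: "\<And>t. integrable ?TN (\<lambda>r. r * exp (t*r))" by (rule TN_xexp_int[OF ctx])
  have nn: "AE r in ?TN. 0 \<le> r" by (rule AE_TN_nn[OF ctx])
  have Fpos: "0 < F s" for s unfolding F_def by (rule TN_Epos[OF ctx])
  have Fanti: "F s2 \<le> F s1" if "s1 \<le> s2" for s1 s2 unfolding F_def
  proof (rule integral_mono_AE)
    show "integrable ?TN (\<lambda>x. x * exp ((-s2)*x))" "integrable ?TN (\<lambda>x. x * exp ((-s1)*x))" by (rule Fint)+
    show "AE x in ?TN. x * exp ((-s2)*x) \<le> x * exp ((-s1)*x)"
      using nn
    proof eventually_elim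
      case (elim x)
      have "(-s2)*x \<le> (-s1)*x" using that elim by (intro mult_right_mono) auto
      then show ?case using elim by (intro mult_left_mono) auto
    qed
  qed
  have Fmeas: "F \<in> borel_measurable borel"
  proof -
    have "(\<lambda>s. - F s) \<in> borel_measurable borel"
      by (rule borel_measurable_mono) (auto simp: mono_def intro: Fanti)
    then show ?thesis using borel_measurable_uminus_eq[of F borel] by simp
  qed
  have corr: "F s * F d \<le> F 0 * F (s + d)" if "0 \<le> s" "0 \<le> d" for s d
    unfolding F_def by (rule corr_ineq[OF sets_TN nn Fint that])
  have dens: "(\<lambda>x. \<integral>\<^sup>+ b. ennreal (laplace_density b (x - v)) \<partial>?B) = (\<lambda>x. ennreal (F \<bar>x - v\<bar> / 2))" for v
  proof
    fix x
    have bm: "(?TN \<rightarrow>\<^sub>M (borel :: real measure)) = (borel \<rightarrow>\<^sub>M borel)"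
      by (rule measurable_cong_sets[OF sets_TN refl])
    have bm2: "(borel_measurable ?B :: (real \<Rightarrow> ennreal) set) = borel_measurable borel"
      by (rule measurable_cong_sets) auto
    have "(\<integral>\<^sup>+ b. ennreal (laplace_density b (x - v)) \<partial>?B)
        = (\<integral>\<^sup>+ r. ennreal (laplace_density (1/r) (x - v)) \<partial>?TN)"
    proof (rule nn_integral_distr)
      show "(\<lambda>r. 1 / r) \<in> ?TN \<rightarrow>\<^sub>M borel" unfolding bm by simp
      show "(\<lambda>b. ennreal (laplace_density b (x - v))) \<in> borel_measurable ?B"
        unfolding bm2 laplace_density_def by measurable
    qed
    also have "\<dots> = (\<integral>\<^sup>+ r. ennreal (r * exp ((- \<bar>x - v\<bar>)*r) / 2) \<partial>?TN)"
      by (simp add: lap_inv)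
    also have "\<dots> = ennreal (\<integral>r. r * exp ((- \<bar>x - v\<bar>)*r) / 2 \<partial>?TN)"
    proof (rule nn_integral_eq_integral)
      show "integrable ?TN (\<lambda>r. r * exp ((- \<bar>x - v\<bar>)*r) / 2)"
        by (rule integrable_divide_zero) (rule Fint)
      show "AE r in ?TN. 0 \<le> r * exp ((- \<bar>x - v\<bar>)*r) / 2"
        using nn by eventually_elim simp
    qed
    also have "\<dots> = ennreal (F \<bar>x - v\<bar> / 2)" unfolding F_def by simp
    finally show "(\<integral>\<^sup>+ b. ennreal (laplace_density b (x - v)) \<partial>?B) = ennreal (F \<bar>x - v\<bar> / 2)" .
  qed
  have R: "R2DP_laplace ?B v = density lborel (\<lambda>x. ennreal (F \<bar>x - v\<bar> / 2))" for v
    unfolding R2DP_laplace_def dens ..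
  have fmeas: "(\<lambda>x. ennreal (F \<bar>x - v\<bar> / 2)) \<in> borel_measurable borel" for v
    using Fmeas by measurable
  let ?D = "sensitivity adj q"
  have mgf_eq: "mgf ?TN = (\<lambda>t. \<integral>x. exp (t*x) \<partial>?TN)" by (rule ext) (simp add: mgf_def)
  have der: "deriv (mgf ?TN) (- ?D) = F ?D"
    unfolding mgf_eq F_def
    by (rule DERIV_imp_deriv[OF mgf_deriv[OF sets_TN nn TN_exp_int[OF ctx]]])
  have num: "\<mu> + \<sigma> * (phi (tn_alpha \<mu> \<sigma> a) - phi (tn_beta \<mu> \<sigma> c))
                      / (Phi (tn_beta \<mu> \<sigma> c) - Phi (tn_alpha \<mu> \<sigma> a)) = F 0"
    unfolding F_def using TN_E0[OF ctx] by simp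
  define K where "K = F 0 / F ?D"
  have K0: "0 < K" unfolding K_def using Fpos by simp
  show ?thesis
    unfolding differentially_private_def num der K_def[symmetric]
  proof (intro allI impI ballI)
    fix d d' and S :: "real set"
    assume adj: "adj d d'" and S: "S \<in> sets borel"
    have "(\<lambda>p. \<bar>q (fst p) - q (snd p)\<bar>) (d, d') \<le> (SUP p \<in> {(d, d'). adj d d'}. \<bar>q (fst p) - q (snd p)\<bar>)"
      by (rule cSUP_upper[OF _ sens_bdd]) (use adj in simp)
    then have hD: "\<bar>q d - q d'\<bar> \<le> ?D" unfolding sensitivity_def by simp
    then have D0: "0 \<le> ?D" by linarith
    have pw: "ennreal (F \<bar>x - q d\<bar> / 2) * indicator S x \<le> ennreal K * (ennreal (F \<bar>x - q d'\<bar> / 2) * indicator S x)" for x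
    proof -
      let ?s = "\<bar>x - q d\<bar>" and ?s' = "\<bar>x - q d'\<bar>"
      have "?s' \<le> ?s + ?D" using hD by linarith
      then have "F (?s + ?D) \<le> F ?s'" by (rule Fanti)
      moreover have "F ?s * F ?D \<le> F 0 * F (?s + ?D)" by (rule corr) (use D0 in auto)
      ultimately have "F ?s * F ?D \<le> F 0 * F ?s'"
        using Fpos[of 0] by (meson mult_left_mono less_imp_le order_trans)
      then have "F ?s \<le> K * F ?s'" unfolding K_def using Fpos[of ?D] by (simp add: field_simps)
      then have "F ?s / 2 \<le> K * (F ?s' / 2)" by simp
      then have "ennreal (F ?s / 2) \<le> ennreal K * ennreal (F ?s' / 2)"
        using K0 Fpos[of ?s'] by (simp add: ennreal_mult[symmetric] ennreal_leI)
      then show ?thesis by (cases "x \<in> S") (auto simp: mult.assoc)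
    qed
    have "emeasure (R2DP_laplace ?B (q d)) S = (\<integral>\<^sup>+ x. ennreal (F \<bar>x - q d\<bar> / 2) * indicator S x \<partial>lborel)"
      unfolding R using S by (subst emeasure_density) (auto simp: fmeas)
    also have "\<dots> \<le> (\<integral>\<^sup>+ x. ennreal K * (ennreal (F \<bar>x - q d'\<bar> / 2) * indicator S x) \<partial>lborel)"
      by (rule nn_integral_mono) (rule pw)
    also have "\<dots> = ennreal K * (\<integral>\<^sup>+ x. ennreal (F \<bar>x - q d'\<bar> / 2) * indicator S x \<partial>lborel)"
      by (rule nn_integral_cmult) (use S fmeas in measurable)
    also have "\<dots> = ennreal K * emeasure (R2DP_laplace ?B (q d')) S"
      unfolding R using S by (subst emeasure_density) (auto simp: fmeas)
    also have "ennreal K = ennreal (exp (ln K))" using K0 by simp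
    finally show "emeasure (R2DP_laplace ?B (q d)) S \<le> ennreal (exp (ln K)) * emeasure (R2DP_laplace ?B (q d')) S" .
  qed
qed

end
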